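(* Suppose there exist vectors $\mathbf{v}_{1},\dots,\mathbf{v}_{N}\in\mathbb{C}^{2N}$ such that, with $\mathbf{u}_{n}=\bm{\Gamma}\mathbf{v}_{n}^{*}$: (a) the $2N$ vectors $\mathbf{v}_{1},\dots,\mathbf{v}_{N},\mathbf{u}_{1},\dots,\mathbf{u}_{N}$ are eigenvectors of $\mathbf{D}$ and are mutually $\mathbf{R}$-orthogonal (any two distinct ones have $\mathbf{R}$-inner product $0$); (b) $\langle\mathbf{v}_{n},\mathbf{v}_{n}\rangle=1$ for each $n$; (c) the eigenvalue $\mu_{n}$ of $\mathbf{D}$ associated with $\mathbf{v}_{n}$ is positive for each $n$. Then there exists a normal mode transformation $\mathbf{T}$ whose numbers $\mu_{1},\dots,\mu_{N}$ are the eigenvalues of $\mathbf{D}$ associated with $\mathbf{v}_{1},\dots,\mathbf{v}_{N}$.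
   Context: Fix an integer $N\ge 1$, real numbers $v$ with $|v|<1$, $L>0$, $L_{\star}\ge 0$, an integer $M\ge 1$ and real coefficients $c_{1}=1,c_{2},\dots,c_{M}$. Let $F(k)=\sum_{i=1}^{M}(-1)^{i-1}c_{i}L_{\star}^{2i-2}k^{2i-1}$ and $k_{n}=n\pi/L$, and assume $F(k_{n})^{2}\neq v^{2}k_{n}^{2}$ for $n=1,\dots,N$. Put $u_{n}=\sqrt{|F(k_{n})^{2}-v^{2}k_{n}^{2}|}/k_{n}>0$, and $\varepsilon_{n}=1$ if $F(k_{n})^{2}-v^{2}k_{n}^{2}>0$, $\varepsilon_{n}=0$ otherwise. Define $N\times N$ matrices $\bm\sigma,\bm\rho,\bm\xi$ by $\sigma_{nn}=0$, $\sigma_{nm}=\dfrac{2iv\sqrt{nm}\,[1-(-1)^{n+m}]}{\pi\sqrt{u_{n}u_{m}}\,(m^{2}-n^{2})}$ for $n\neq m$, $\bm\rho=\mathrm{diag}(n u_{n}\varepsilon_{n})$, $\bm\xi=\mathrm{diag}(-n u_{n}(1-\varepsilon_{n}))$. With $\mathbf{I}$ the $N\times N$ identity, define the $2N\times 2N$ matrices $\bm{\Sigma}=\begin{pmatrix}\mathbf{I}&\mathbf{0}\\ \mathbf{0}&-\mathbf{I}\end{pmatrix}$, $\bm{\Gamma}=\begin{pmatrix}\mathbf{0}&\mathbf{I}\\ \mathbf{I}&\mathbf{0}\end{pmatrix}$, $\mathbf{R}=\bm{\Sigma}-\begin{pmatrix}\bm\sigma&\bm\sigma\\ \bm\sigma&\bm\sigma\end{pmatrix}$,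 $\bm{\Omega}=\begin{pmatrix}\bm\rho&\bm\xi\\ \bm\xi&\bm\rho\end{pmatrix}$. Standing assumption: $\mathbf{R}$ is invertible. Let $\mathbf{D}=\mathbf{R}^{-1}\bm{\Omega}$. Here ${}^{*}$ denotes entrywise complex conjugation, ${}^{\mathrm{H}}$ the conjugate transpose, and the $\mathbf{R}$-inner product is $\langle\mathbf{x},\mathbf{y}\rangle=\mathbf{x}^{\mathrm{H}}\mathbf{R}\mathbf{y}$. A normal mode transformation is a $2N\times2N$ matrix $\mathbf{T}$ such that (i) $\mathbf{T}^{\mathrm{H}}\mathbf{R}\mathbf{T}=\bm{\Sigma}$; (ii) $\mathbf{T}=\bm{\Gamma}\mathbf{T}^{*}\bm{\Gamma}$; (iii) $\mathbf{T}^{-1}\mathbf{D}\mathbf{T}=\mathrm{diag}(\mu_{1},\dots,\mu_{N},-\mu_{1},\dots,-\mu_{N})$ for some real numbers $\mu_{n}>0$, where $\mathbf{T}^{-1}=\bm{\Sigma}\mathbf{T}^{\mathrm{H}}\mathbf{R}$. *)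

theory Defs
  imports Complex_Main "Jordan_Normal_Form.Schur_Decomposition" "Jordan_Normal_Form.Char_Poly"
    "Jordan_Normal_Form.Gauss_Jordan_Elimination"
begin

(* Paper indices n = 1..N correspond to 0-based matrix indices n-1.
   Parameters: N, vel (= v), L, Ls (= L_star), M, c (c i for i = 1..M). *)

definition Fk :: "nat \<Rightarrow> (nat \<Rightarrow> real) \<Rightarrow> real \<Rightarrow> real \<Rightarrow> real" where
  "Fk M c Ls k = (\<Sum>i=1..M. (-1) ^ (i - 1) * c i * Ls ^ (2*i - 2) * k ^ (2*i - 1))"

definition kn :: "real \<Rightarrow> nat \<Rightarrow> real" where
  "kn L n = real n * pi / L"

definition disc :: "real \<Rightarrow> real \<Rightarrow> real \<Rightarrow> nat \<Rightarrow> (nat \<Rightarrow> real) \<Rightarrow> nat \<Rightarrow> real" where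
  "disc vel L Ls M c n = (Fk M c Ls (kn L n))\<^sup>2 - vel\<^sup>2 * (kn L n)\<^sup>2"

definition un :: "real \<Rightarrow> real \<Rightarrow> real \<Rightarrow> nat \<Rightarrow> (nat \<Rightarrow> real) \<Rightarrow> nat \<Rightarrow> real" where
  "un vel L Ls M c n = sqrt \<bar>disc vel L Ls M c n\<bar> / kn L n"

definition epsn :: "real \<Rightarrow> real \<Rightarrow> real \<Rightarrow> nat \<Rightarrow> (nat \<Rightarrow> real) \<Rightarrow> nat \<Rightarrow> real" where
  "epsn vel L Ls M c n = (if disc vel L Ls M c n > 0 then 1 else 0)"

definition sigma_mat :: "nat \<Rightarrow> real \<Rightarrow> real \<Rightarrow> real \<Rightarrow> nat \<Rightarrow> (nat \<Rightarrow> real) \<Rightarrow> complex mat" where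
  "sigma_mat N vel L Ls M c = mat N N (\<lambda>(i, j).
     let n = i + 1; m = j + 1; u = un vel L Ls M c in
     if n = m then 0
     else (2 * \<i> * complex_of_real vel * complex_of_real (sqrt (real (n * m)))
            * complex_of_real (1 - (-1) ^ (n + m)))
          / complex_of_real (pi * sqrt (u n * u m) * (real m ^ 2 - real n ^ 2)))"

definition rho_mat :: "nat \<Rightarrow> real \<Rightarrow> real \<Rightarrow> real \<Rightarrow> nat \<Rightarrow> (nat \<Rightarrow> real) \<Rightarrow> complex mat" where
  "rho_mat N vel L Ls M c = mat_diag N (\<lambda>i. complex_of_real
     (real (i + 1) * un vel L Ls M c (i + 1) * epsn vel L Ls M c (i + 1)))"

definition xi_mat :: "nat \<Rightarrow> real \<Rightarrow> real \<Rightarrow> real \<Rightarrow> nat \<Rightarrow> (nat \<Rightarrow> real) \<Rightarrow> complex mat" where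
  "xi_mat N vel L Ls M c = mat_diag N (\<lambda>i. complex_of_real
     (- real (i + 1) * un vel L Ls M c (i + 1) * (1 - epsn vel L Ls M c (i + 1))))"

definition Sigma_mat :: "nat \<Rightarrow> complex mat" where
  "Sigma_mat N = four_block_mat (1\<^sub>m N) (0\<^sub>m N N) (0\<^sub>m N N) (- 1\<^sub>m N)"

definition Gamma_mat :: "nat \<Rightarrow> complex mat" where
  "Gamma_mat N = four_block_mat (0\<^sub>m N N) (1\<^sub>m N) (1\<^sub>m N) (0\<^sub>m N N)"

definition R_mat :: "nat \<Rightarrow> real \<Rightarrow> real \<Rightarrow> real \<Rightarrow> nat \<Rightarrow> (nat \<Rightarrow> real) \<Rightarrow> complex mat" where
  "R_mat N vel L Ls M c = Sigma_mat N -
     (let s = sigma_mat N vel L Ls M c in four_block_mat s s s s)"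

definition Omega_mat :: "nat \<Rightarrow> real \<Rightarrow> real \<Rightarrow> real \<Rightarrow> nat \<Rightarrow> (nat \<Rightarrow> real) \<Rightarrow> complex mat" where
  "Omega_mat N vel L Ls M c =
     (let r = rho_mat N vel L Ls M c; x = xi_mat N vel L Ls M c in four_block_mat r x x r)"

definition D_mat :: "nat \<Rightarrow> real \<Rightarrow> real \<Rightarrow> real \<Rightarrow> nat \<Rightarrow> (nat \<Rightarrow> real) \<Rightarrow> complex mat" where
  "D_mat N vel L Ls M c = the (mat_inverse (R_mat N vel L Ls M c)) * Omega_mat N vel L Ls M c"

definition conj_mat :: "complex mat \<Rightarrow> complex mat" where
  "conj_mat A = map_mat cnj A"

definition conj_vec :: "complex vec \<Rightarrow> complex vec" where
  "conj_vec x = map_vec cnj x"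

definition R_inner :: "complex mat \<Rightarrow> complex vec \<Rightarrow> complex vec \<Rightarrow> complex" where
  "R_inner R x y = conj_vec x \<bullet> (R *\<^sub>v y)"

(* normal mode transformation with numbers mu 0..N-1 (paper mu_1..mu_N) *)
definition normal_mode_transformation ::
  "nat \<Rightarrow> complex mat \<Rightarrow> complex mat \<Rightarrow> complex mat \<Rightarrow> (nat \<Rightarrow> real) \<Rightarrow> bool" where
  "normal_mode_transformation N R D T mu \<longleftrightarrow>
     T \<in> carrier_mat (2*N) (2*N) \<and>
     mat_adjoint T * R * T = Sigma_mat N \<and>
     T = Gamma_mat N * conj_mat T * Gamma_mat N \<and>
     (\<forall>n<N. mu n > 0) \<and>
     (Sigma_mat N * mat_adjoint T * R) * D * T =
        mat_diag (2*N) (\<lambda>k. if k < N then complex_of_real (mu k)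
                              else - complex_of_real (mu (k - N)))"

end

theory Submission imports Defs begin

definition ff :: "nat \<Rightarrow> nat \<Rightarrow> nat" where "ff N i = (if i < N then i + N else i - N)"

lemma ff_lt: "i < 2*N \<Longrightarrow> ff N i < 2*N" unfolding ff_def by auto
lemma ff_ff: "i < 2*N \<Longrightarrow> ff N (ff N i) = i" unfolding ff_def by auto
lemma ff_inj: "i < 2*N \<Longrightarrow> j < 2*N \<Longrightarrow> (ff N i = ff N j) = (i = j)" unfolding ff_def by auto
lemma ff_swap: "k < 2*N \<Longrightarrow> j < 2*N \<Longrightarrow> (j = ff N k) = (k = ff N j)" unfolding ff_def by auto
lemma ff_bij: "bij_betw (ff N) {0..<2*N} {0..<2*N}"
  by (rule bij_betw_byWitness[where f'="ff N"]) (auto simp: ff_ff ff_lt)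

lemma Gamma_carrier[simp]: "Gamma_mat N \<in> carrier_mat (2*N) (2*N)"
  unfolding Gamma_mat_def by (auto simp: mult_2)

lemma Gamma_dims[simp]: "dim_row (Gamma_mat N) = 2*N" "dim_col (Gamma_mat N) = 2*N"
  unfolding Gamma_mat_def by (auto simp: mult_2)

lemma Gamma_idx: "i < 2*N \<Longrightarrow> j < 2*N \<Longrightarrow> Gamma_mat N $$ (i,j) = (if j = ff N i then 1 else 0)"
  unfolding Gamma_mat_def ff_def by auto

lemma sum_single: "finite S \<Longrightarrow> a \<in> S \<Longrightarrow> (\<Sum>j\<in>S. (if j = a then 1 else 0) * (g j :: complex)) = g a"
  by (simp add: if_distrib[where f="\<lambda>x. x * _"] cong: if_cong)

lemma sum_single': "finite S \<Longrightarrow> a \<in> S \<Longrightarrow> (\<Sum>j\<in>S. (g j :: complex) * (if j = a then 1 else 0)) = g a"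
  by (simp add: if_distrib[where f="\<lambda>x. _ * x"] cong: if_cong)

lemma Gamma_mult_vec: "x \<in> carrier_vec (2*N) \<Longrightarrow> i < 2*N \<Longrightarrow> (Gamma_mat N *\<^sub>v x) $ i = x $ ff N i"
proof -
  assume x: "x \<in> carrier_vec (2*N)" and i: "i < 2*N"
  have "(Gamma_mat N *\<^sub>v x) $ i = (\<Sum>j\<in>{0..<2*N}. (if j = ff N i then 1 else 0) * x $ j)"
    using x i by (auto simp: scalar_prod_def Gamma_idx intro!: sum.cong)
  also have "\<dots> = x $ ff N i" using i ff_lt by (intro sum_single) auto
  finally show ?thesis .
qed

lemma Gamma_mult_left: "A \<in> carrier_mat (2*N) nc \<Longrightarrow> i < 2*N \<Longrightarrow> j < nc \<Longrightarrow> (Gamma_mat N * A) $$ (i,j) = A $$ (ff N i, j)"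
proof -
  assume A: "A \<in> carrier_mat (2*N) nc" and i: "i < 2*N" and j: "j < nc"
  have "(Gamma_mat N * A) $$ (i,j) = (\<Sum>k\<in>{0..<2*N}. (if k = ff N i then 1 else 0) * A $$ (k, j))"
    using A i j by (auto simp: scalar_prod_def Gamma_idx intro!: sum.cong)
  also have "\<dots> = A $$ (ff N i, j)" using i ff_lt by (intro sum_single) auto
  finally show ?thesis .
qed

lemma Gamma_mult_right: "A \<in> carrier_mat nr (2*N) \<Longrightarrow> i < nr \<Longrightarrow> j < 2*N \<Longrightarrow> (A * Gamma_mat N) $$ (i,j) = A $$ (i, ff N j)"
proof -
  assume A: "A \<in> carrier_mat nr (2*N)" and i: "i < nr" and j: "j < 2*N"
  have "(A * Gamma_mat N) $$ (i,j) = (\<Sum>k\<in>{0..<2*N}. A $$ (i, k) * (if k = ff N j then 1 else 0))"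
    using A i j by (auto simp: scalar_prod_def Gamma_idx ff_swap intro!: sum.cong)
  also have "\<dots> = A $$ (i, ff N j)" using j ff_lt by (intro sum_single') auto
  finally show ?thesis .
qed


lemma sigma_carrier[simp]: "sigma_mat N vel L Ls M c \<in> carrier_mat N N"
  unfolding sigma_mat_def by auto

lemma sigma_dims[simp]: "dim_row (sigma_mat N vel L Ls M c) = N" "dim_col (sigma_mat N vel L Ls M c) = N"
  unfolding sigma_mat_def by auto

lemma sigma_cnj: "i < N \<Longrightarrow> j < N \<Longrightarrow> cnj (sigma_mat N vel L Ls M c $$ (i,j)) = - sigma_mat N vel L Ls M c $$ (i,j)"
  unfolding sigma_mat_def Let_def by (simp add: complex_cnj_divide)

lemma Sigma_carrier[simp]: "Sigma_mat N \<in> carrier_mat (2*N) (2*N)"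
  unfolding Sigma_mat_def by (auto simp: mult_2)

lemma Sigma_idx: "i < 2*N \<Longrightarrow> j < 2*N \<Longrightarrow> Sigma_mat N $$ (i,j) = (if i = j then (if i < N then 1 else -1) else 0)"
  unfolding Sigma_mat_def by auto

lemma S4_carrier[simp]: "four_block_mat (sigma_mat N vel L Ls M c) (sigma_mat N vel L Ls M c)
     (sigma_mat N vel L Ls M c) (sigma_mat N vel L Ls M c) \<in> carrier_mat (2*N) (2*N)"
  by (auto simp: mult_2)

lemma R_carrier[simp]: "R_mat N vel L Ls M c \<in> carrier_mat (2*N) (2*N)"
  unfolding R_mat_def Let_def by (rule minus_carrier_mat) (rule S4_carrier)

lemma R_dims[simp]: "dim_row (R_mat N vel L Ls M c) = 2*N" "dim_col (R_mat N vel L Ls M c) = 2*N"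
  using R_carrier unfolding carrier_mat_def by blast+

lemma R_idx: "i < 2*N \<Longrightarrow> j < 2*N \<Longrightarrow> R_mat N vel L Ls M c $$ (i,j) =
   Sigma_mat N $$ (i,j) - sigma_mat N vel L Ls M c $$ (if i < N then i else i - N, if j < N then j else j - N)"
proof -
  assume i: "i < 2*N" and j: "j < 2*N"
  let ?s = "sigma_mat N vel L Ls M c"
  have "R_mat N vel L Ls M c $$ (i,j) = Sigma_mat N $$ (i,j) - four_block_mat ?s ?s ?s ?s $$ (i,j)"
    unfolding R_mat_def Let_def using i j by (subst index_minus_mat) (auto simp: mult_2)
  also have "four_block_mat ?s ?s ?s ?s $$ (i,j) = ?s $$ (if i < N then i else i - N, if j < N then j else j - N)"
    using i j by (subst index_mat_four_block) (auto simp: mult_2)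
  finally show ?thesis .
qed

lemma R_ff: "i < 2*N \<Longrightarrow> j < 2*N \<Longrightarrow> R_mat N vel L Ls M c $$ (ff N i, ff N j) = - cnj (R_mat N vel L Ls M c $$ (i,j))"
proof -
  assume i: "i < 2*N" and j: "j < 2*N"
  have e1: "(if ff N i < N then ff N i else ff N i - N) = (if i < N then i else i - N)"
    "(if ff N j < N then ff N j else ff N j - N) = (if j < N then j else j - N)"
    using i j unfolding ff_def by auto
  have e2: "Sigma_mat N $$ (ff N i, ff N j) = - Sigma_mat N $$ (i,j)"
    using i j ff_lt[OF i] ff_lt[OF j] unfolding Sigma_idx[OF ff_lt[OF i] ff_lt[OF j]] Sigma_idx[OF i j]
    by (auto simp: ff_def)
  have e3: "cnj (Sigma_mat N $$ (i,j)) = Sigma_mat N $$ (i,j)"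
    unfolding Sigma_idx[OF i j] by auto
  have e4: "cnj (sigma_mat N vel L Ls M c $$ (if i < N then i else i - N, if j < N then j else j - N))
     = - sigma_mat N vel L Ls M c $$ (if i < N then i else i - N, if j < N then j else j - N)"
    using i j by (intro sigma_cnj) auto
  show ?thesis
    unfolding R_idx[OF ff_lt[OF i] ff_lt[OF j]] R_idx[OF i j] e1 e2 complex_cnj_diff e3 e4 by simp
qed

lemma Omega_carrier[simp]: "Omega_mat N vel L Ls M c \<in> carrier_mat (2*N) (2*N)"
  unfolding Omega_mat_def Let_def rho_mat_def xi_mat_def by (auto simp: mult_2)

lemma Omega_dims[simp]: "dim_row (Omega_mat N vel L Ls M c) = 2*N" "dim_col (Omega_mat N vel L Ls M c) = 2*N"
  using Omega_carrier unfolding carrier_mat_def by blast+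

lemma Omega_ff: "i < 2*N \<Longrightarrow> j < 2*N \<Longrightarrow> Omega_mat N vel L Ls M c $$ (ff N i, ff N j) = Omega_mat N vel L Ls M c $$ (i,j)"
  using ff_lt[of i N] ff_lt[of j N]
  unfolding Omega_mat_def Let_def rho_mat_def xi_mat_def mat_diag_def
  by (auto simp: ff_def)

lemma Omega_cnj: "i < 2*N \<Longrightarrow> j < 2*N \<Longrightarrow> cnj (Omega_mat N vel L Ls M c $$ (i,j)) = Omega_mat N vel L Ls M c $$ (i,j)"
  unfolding Omega_mat_def Let_def rho_mat_def xi_mat_def mat_diag_def
  by auto


lemma conj_mat_carrier[simp]: "conj_mat A \<in> carrier_mat (dim_row A) (dim_col A)"
  unfolding conj_mat_def by auto

lemma conj_mat_dims[simp]: "dim_row (conj_mat A) = dim_row A" "dim_col (conj_mat A) = dim_col A"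
  unfolding conj_mat_def by auto

lemma conj_mat_idx[simp]: "i < dim_row A \<Longrightarrow> j < dim_col A \<Longrightarrow> conj_mat A $$ (i,j) = cnj (A $$ (i,j))"
  unfolding conj_mat_def by auto

lemma conj_vec_dim[simp]: "dim_vec (conj_vec x) = dim_vec x"
  unfolding conj_vec_def by auto

lemma conj_vec_idx[simp]: "i < dim_vec x \<Longrightarrow> conj_vec x $ i = cnj (x $ i)"
  unfolding conj_vec_def by auto

lemma conj_vec_carrier[simp]: "x \<in> carrier_vec n \<Longrightarrow> conj_vec x \<in> carrier_vec n"
  unfolding conj_vec_def by auto

lemma conj_vec_conj_vec[simp]: "conj_vec (conj_vec x) = x"
  unfolding conj_vec_def by (auto)

lemma conj_mult_vec: "A \<in> carrier_mat nr nc \<Longrightarrow> x \<in> carrier_vec nc \<Longrightarrow>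
   conj_vec (A *\<^sub>v x) = conj_mat A *\<^sub>v conj_vec x"
  by (rule eq_vecI) (auto simp: scalar_prod_def cnj_sum intro!: sum.cong)

lemma conj_smult: "conj_vec (a \<cdot>\<^sub>v x) = cnj a \<cdot>\<^sub>v conj_vec x"
  by (rule eq_vecI) auto

lemma cnj_scalar: "x \<in> carrier_vec n \<Longrightarrow> y \<in> carrier_vec n \<Longrightarrow> cnj (conj_vec x \<bullet> y) = x \<bullet> conj_vec y"
  by (auto simp: scalar_prod_def cnj_sum intro!: sum.cong)

lemma Gamma_conj[simp]: "conj_mat (Gamma_mat N) = Gamma_mat N"
  by (rule eq_matI) (auto simp: Gamma_idx)

lemma Omega_conj[simp]: "conj_mat (Omega_mat N vel L Ls M c) = Omega_mat N vel L Ls M c"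
  by (rule eq_matI) (auto simp: Omega_cnj)

lemma Gamma_vec_carrier[simp]: "x \<in> carrier_vec (2*N) \<Longrightarrow> Gamma_mat N *\<^sub>v x \<in> carrier_vec (2*N)"
  by (rule mult_mat_vec_carrier) auto

lemma Gamma_scalar: "x \<in> carrier_vec (2*N) \<Longrightarrow> y \<in> carrier_vec (2*N) \<Longrightarrow>
   (Gamma_mat N *\<^sub>v x) \<bullet> (Gamma_mat N *\<^sub>v y) = x \<bullet> y"
proof -
  assume x: "x \<in> carrier_vec (2*N)" and y: "y \<in> carrier_vec (2*N)"
  have "(Gamma_mat N *\<^sub>v x) \<bullet> (Gamma_mat N *\<^sub>v y) = (\<Sum>i\<in>{0..<2*N}. x $ ff N i * y $ ff N i)"
    unfolding scalar_prod_def[of "Gamma_mat N *\<^sub>v x"] using x y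
    by (auto simp: Gamma_mult_vec simp del: index_mult_mat_vec intro!: sum.cong)
  also have "\<dots> = (\<Sum>i\<in>{0..<2*N}. x $ i * y $ i)"
    using sum.reindex_bij_betw[OF ff_bij[of N], of "\<lambda>i. x $ i * y $ i"] by simp
  also have "\<dots> = x \<bullet> y" using y by (simp add: scalar_prod_def)
  finally show ?thesis .
qed

lemma R_Gamma: "R_mat N vel L Ls M c * Gamma_mat N = - (Gamma_mat N * conj_mat (R_mat N vel L Ls M c))"
proof (rule eq_matI)
  fix i j assume i: "i < dim_row (- (Gamma_mat N * conj_mat (R_mat N vel L Ls M c)))"
    and j: "j < dim_col (- (Gamma_mat N * conj_mat (R_mat N vel L Ls M c)))"
  hence i: "i < 2*N" and j: "j < 2*N" by auto
  have "(R_mat N vel L Ls M c * Gamma_mat N) $$ (i,j) = R_mat N vel L Ls M c $$ (i, ff N j)"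
    using i j by (intro Gamma_mult_right) auto
  also have "\<dots> = - cnj (R_mat N vel L Ls M c $$ (ff N i, j))"
    using R_ff[OF ff_lt[OF i] j, of vel L Ls M c] ff_ff[OF i] by simp
  also have "\<dots> = - ((Gamma_mat N * conj_mat (R_mat N vel L Ls M c)) $$ (i,j))"
    using i j ff_lt[OF i] by (subst Gamma_mult_left[of _ N "2*N"]) auto
  finally show "(R_mat N vel L Ls M c * Gamma_mat N) $$ (i,j) = (- (Gamma_mat N * conj_mat (R_mat N vel L Ls M c))) $$ (i,j)"
    using i j by simp
qed auto

lemma Omega_Gamma: "Omega_mat N vel L Ls M c * Gamma_mat N = Gamma_mat N * Omega_mat N vel L Ls M c"
proof (rule eq_matI)
  fix i j assume i: "i < dim_row (Gamma_mat N * Omega_mat N vel L Ls M c)"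
    and j: "j < dim_col (Gamma_mat N * Omega_mat N vel L Ls M c)"
  hence i: "i < 2*N" and j: "j < 2*N" by auto
  have "(Omega_mat N vel L Ls M c * Gamma_mat N) $$ (i,j) = Omega_mat N vel L Ls M c $$ (i, ff N j)"
    using i j by (intro Gamma_mult_right) auto
  also have "\<dots> = Omega_mat N vel L Ls M c $$ (ff N i, j)"
    using Omega_ff[OF ff_lt[OF i] j, of vel L Ls M c] ff_ff[OF i] by simp
  also have "\<dots> = (Gamma_mat N * Omega_mat N vel L Ls M c) $$ (i,j)"
    using i j by (subst Gamma_mult_left[of _ N "2*N"]) auto
  finally show "(Omega_mat N vel L Ls M c * Gamma_mat N) $$ (i,j) = (Gamma_mat N * Omega_mat N vel L Ls M c) $$ (i,j)" .
qed auto


lemma R_inverse: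
  assumes "invertible_mat (R_mat N vel L Ls M c)"
  obtains Ri where "mat_inverse (R_mat N vel L Ls M c) = Some Ri"
    "R_mat N vel L Ls M c * Ri = 1\<^sub>m (2*N)" "Ri * R_mat N vel L Ls M c = 1\<^sub>m (2*N)" "Ri \<in> carrier_mat (2*N) (2*N)"
proof -
  let ?R = "R_mat N vel L Ls M c"
  from assms obtain B where AB: "?R * B = 1\<^sub>m (2*N)" and BA: "B * ?R = 1\<^sub>m (dim_row B)"
    unfolding invertible_mat_def inverts_mat_def by auto
  have "dim_col B = 2*N" using arg_cong[OF AB, of dim_col] by simp
  moreover have "dim_row B = 2*N" using arg_cong[OF BA, of dim_col] by simp
  ultimately have Bc: "B \<in> carrier_mat (2*N) (2*N)" by auto
  have "?R \<in> Units (ring_mat TYPE(complex) (2*N) ())"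
    unfolding Units_def ring_mat_def using Bc AB BA by auto
  hence "mat_inverse ?R \<noteq> None" using mat_inverse(1)[OF R_carrier[of N vel L Ls M c], where b="()"] by blast
  then obtain Ri where "mat_inverse ?R = Some Ri" by auto
  with mat_inverse(2)[OF R_carrier this] that show ?thesis by auto
qed

lemma amv: "A \<in> carrier_mat (2*N) (2*N) \<Longrightarrow> B \<in> carrier_mat (2*N) (2*N) \<Longrightarrow> v \<in> carrier_vec (2*N)
  \<Longrightarrow> (A * B) *\<^sub>v v = A *\<^sub>v (B *\<^sub>v v)"
  by (rule assoc_mult_mat_vec) auto

lemma R_vec_carrier[simp]: "x \<in> carrier_vec (2*N) \<Longrightarrow> R_mat N vel L Ls M c *\<^sub>v x \<in> carrier_vec (2*N)"
  by (rule mult_mat_vec_carrier[OF R_carrier])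

lemma a2: "A \<in> carrier_mat (2*N) (2*N) \<Longrightarrow> B \<in> carrier_mat (2*N) (2*N) \<Longrightarrow> C \<in> carrier_mat (2*N) (2*N)
  \<Longrightarrow> A * B * C = A * (B * C)"
  by (rule assoc_mult_mat) auto

lemma mc2: "A \<in> carrier_mat (2*N) (2*N) \<Longrightarrow> B \<in> carrier_mat (2*N) (2*N) \<Longrightarrow> A * B \<in> carrier_mat (2*N) (2*N)"
  by (rule mult_carrier_mat) auto

lemma adj_row: "A \<in> carrier_mat nr nc \<Longrightarrow> j < nc \<Longrightarrow> row (mat_adjoint A) j = conj_vec (col A j)"
  unfolding mat_adjoint_def conj_vec_def
  by (rule eq_vecI) (auto simp: mat_of_rows_def)

lemma adj_carrier: "A \<in> carrier_mat nr nc \<Longrightarrow> mat_adjoint A \<in> carrier_mat nc nr"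
  unfolding mat_adjoint_def by (auto simp: mat_of_rows_def)

lemma Sigma_dims[simp]: "dim_row (Sigma_mat N) = 2*N" "dim_col (Sigma_mat N) = 2*N"
  unfolding Sigma_mat_def by (auto simp: mult_2)

lemma Sigma_diag: "Sigma_mat N = mat_diag (2*N) (\<lambda>i. if i < N then 1 else -1)"
  by (rule eq_matI) (auto simp: Sigma_idx mat_diag_def)

lemma Sigma_sq: "Sigma_mat N * Sigma_mat N = 1\<^sub>m (2*N)"
  unfolding Sigma_diag mat_diag_diag by (subst mat_diag_one[symmetric]) (rule arg_cong[where f="mat_diag _"], auto)

theorem lemma3:
  fixes N M :: nat and vel L Ls :: real and c :: "nat \<Rightarrow> real"
    and vs :: "nat \<Rightarrow> complex vec" and mu :: "nat \<Rightarrow> real"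
  assumes N1: "N \<ge> 1" and vel: "\<bar>vel\<bar> < 1" and L: "L > 0" and Ls: "Ls \<ge> 0"
    and M1: "M \<ge> 1" and c1: "c 1 = 1"
    and nondeg: "\<forall>n\<in>{1..N}. (Fk M c Ls (kn L n))\<^sup>2 \<noteq> vel\<^sup>2 * (kn L n)\<^sup>2"
    and Rinv: "invertible_mat (R_mat N vel L Ls M c)"
    and vs_dim: "\<forall>n<N. vs n \<in> carrier_vec (2*N)"
    and eig: "\<forall>k<2*N. \<exists>lam. eigenvector (D_mat N vel L Ls M c)
               (if k < N then vs k else Gamma_mat N *\<^sub>v conj_vec (vs (k - N))) lam"
    and orth: "\<forall>j<2*N. \<forall>k<2*N. j \<noteq> k \<longrightarrow>
               R_inner (R_mat N vel L Ls M c)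
                 (if j < N then vs j else Gamma_mat N *\<^sub>v conj_vec (vs (j - N)))
                 (if k < N then vs k else Gamma_mat N *\<^sub>v conj_vec (vs (k - N))) = 0"
    and norm: "\<forall>n<N. R_inner (R_mat N vel L Ls M c) (vs n) (vs n) = 1"
    and mu_eig: "\<forall>n<N. eigenvector (D_mat N vel L Ls M c) (vs n) (complex_of_real (mu n))"
    and mu_pos: "\<forall>n<N. mu n > 0"
  shows "\<exists>T. normal_mode_transformation N (R_mat N vel L Ls M c) (D_mat N vel L Ls M c) T mu"
proof -
  let ?R = "R_mat N vel L Ls M c" and ?O = "Omega_mat N vel L Ls M c" and ?D = "D_mat N vel L Ls M c"
    and ?G = "Gamma_mat N"
  obtain Ri where Ri: "mat_inverse ?R = Some Ri" "?R * Ri = 1\<^sub>m (2*N)" "Ri * ?R = 1\<^sub>m (2*N)"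
    "Ri \<in> carrier_mat (2*N) (2*N)"
    using R_inverse[OF Rinv] by blast
  have Dd: "?D = Ri * ?O" unfolding D_mat_def Ri by simp
  have Dc: "?D \<in> carrier_mat (2*N) (2*N)" unfolding Dd using Ri(4) by auto
  define u where "u n = ?G *\<^sub>v conj_vec (vs n)" for n
  define w where "w k = (if k < N then vs k else u (k - N))" for k
  have vc: "vs n \<in> carrier_vec (2*N)" if "n < N" for n using vs_dim that by auto
  have uc: "u n \<in> carrier_vec (2*N)" if "n < N" for n using vc[OF that] unfolding u_def by auto
  have wc: "w k \<in> carrier_vec (2*N)" if "k < 2*N" for k using vc uc that unfolding w_def by auto
  have Dv: "?D *\<^sub>v vs n = complex_of_real (mu n) \<cdot>\<^sub>v vs n" if "n < N" for n
    using mu_eig that unfolding eigenvector_def by auto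
  have Ov: "?O *\<^sub>v vs n = complex_of_real (mu n) \<cdot>\<^sub>v (?R *\<^sub>v vs n)" if n: "n < N" for n
  proof -
    have "?O *\<^sub>v vs n = (?R * Ri * ?O) *\<^sub>v vs n" using Ri(2) vc[OF n] by simp
    also have "\<dots> = (?R * (Ri * ?O)) *\<^sub>v vs n" using Ri(4) vc[OF n]
      by (simp add: assoc_mult_mat[of _ "2*N" "2*N" _ "2*N" _ "2*N"])
    also have "\<dots> = ?R *\<^sub>v (?D *\<^sub>v vs n)" unfolding Dd using Ri(4) vc[OF n]
      by (intro assoc_mult_mat_vec[of _ "2*N" "2*N"]) auto
    also have "\<dots> = complex_of_real (mu n) \<cdot>\<^sub>v (?R *\<^sub>v vs n)" using Dv[OF n] vc[OF n]
      by (simp add: mult_mat_vec[OF R_carrier])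
    finally show ?thesis .
  qed
  have Ou: "?O *\<^sub>v u n = - complex_of_real (mu n) \<cdot>\<^sub>v (?R *\<^sub>v u n)" if n: "n < N" for n
  proof -
    have cv: "conj_vec (vs n) \<in> carrier_vec (2*N)" using vc[OF n] by auto
    have "?O *\<^sub>v u n = (?O * ?G) *\<^sub>v conj_vec (vs n)" unfolding u_def using cv by (intro amv[symmetric]) auto
    also have "\<dots> = ?G *\<^sub>v (conj_mat ?O *\<^sub>v conj_vec (vs n))" unfolding Omega_Gamma Omega_conj using cv by (intro amv) auto
    also have "\<dots> = ?G *\<^sub>v conj_vec (?O *\<^sub>v vs n)" using conj_mult_vec[OF Omega_carrier vc[OF n]] by simp
    also have "\<dots> = ?G *\<^sub>v (complex_of_real (mu n) \<cdot>\<^sub>v (conj_mat ?R *\<^sub>v conj_vec (vs n)))"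
      unfolding Ov[OF n] conj_smult using conj_mult_vec[OF R_carrier vc[OF n]] by simp
    also have "\<dots> = complex_of_real (mu n) \<cdot>\<^sub>v ((?G * conj_mat ?R) *\<^sub>v conj_vec (vs n))"
    proof -
      have cR: "conj_mat ?R \<in> carrier_mat (2*N) (2*N)" using conj_mat_carrier[of ?R] by simp
      hence "conj_mat ?R *\<^sub>v conj_vec (vs n) \<in> carrier_vec (2*N)" using cv by auto
      thus ?thesis using amv[OF Gamma_carrier cR cv] by (simp add: mult_mat_vec[OF Gamma_carrier])
    qed
    also have "?G * conj_mat ?R = - (?R * ?G)" using R_Gamma[of N vel L Ls M c] by simp
    also have "(- (?R * ?G)) *\<^sub>v conj_vec (vs n) = - (?R *\<^sub>v u n)" unfolding u_def
      using cv vc[OF n] amv[OF R_carrier Gamma_carrier cv] by (subst uminus_mult_mat_vec) auto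
    finally have eq: "?O *\<^sub>v u n = complex_of_real (mu n) \<cdot>\<^sub>v - (?R *\<^sub>v u n)" .
    show ?thesis unfolding eq by (rule eq_vecI) auto
  qed
  have Du: "?D *\<^sub>v u n = (- complex_of_real (mu n)) \<cdot>\<^sub>v u n" if n: "n < N" for n
  proof -
    have "?D *\<^sub>v u n = Ri *\<^sub>v (?O *\<^sub>v u n)" unfolding Dd using Ri(4) uc[OF n] by (intro amv) auto
    also have "\<dots> = (- complex_of_real (mu n)) \<cdot>\<^sub>v (Ri *\<^sub>v (?R *\<^sub>v u n))"
      unfolding Ou[OF n] using Ri(4) uc[OF n] by (intro mult_mat_vec[of _ "2*N" "2*N"]) auto
    also have "Ri *\<^sub>v (?R *\<^sub>v u n) = u n" using amv[OF Ri(4) R_carrier[of N vel L Ls M c] uc[OF n]] Ri(3) uc[OF n] by simp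
    finally show ?thesis .
  qed
  define lam where "lam k = (if k < N then complex_of_real (mu k) else - complex_of_real (mu (k - N)))" for k
  have Dw: "?D *\<^sub>v w k = lam k \<cdot>\<^sub>v w k" if k: "k < 2*N" for k
    using Dv Du k unfolding w_def lam_def by auto
  have uu: "R_inner ?R (u n) (u n) = -1" if n: "n < N" for n
  proof -
    have cv: "conj_vec (vs n) \<in> carrier_vec (2*N)" using vc[OF n] by auto
    have cR: "conj_mat ?R \<in> carrier_mat (2*N) (2*N)" using conj_mat_carrier[of ?R] by simp
    have z: "conj_mat ?R *\<^sub>v conj_vec (vs n) \<in> carrier_vec (2*N)" using cR cv by auto
    have cu: "conj_vec (u n) = ?G *\<^sub>v vs n" unfolding u_def
      using conj_mult_vec[OF Gamma_carrier cv] by simp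
    have Ru: "?R *\<^sub>v u n = - (?G *\<^sub>v (conj_mat ?R *\<^sub>v conj_vec (vs n)))"
    proof -
      have "?R *\<^sub>v u n = (?R * ?G) *\<^sub>v conj_vec (vs n)" unfolding u_def using cv by (intro amv[symmetric]) auto
      also have "?R * ?G = - (?G * conj_mat ?R)" by (rule R_Gamma)
      also have "(- (?G * conj_mat ?R)) *\<^sub>v conj_vec (vs n) = - (?G *\<^sub>v (conj_mat ?R *\<^sub>v conj_vec (vs n)))"
        using cv cR vc[OF n] amv[OF Gamma_carrier cR cv] by (subst uminus_mult_mat_vec) auto
      finally show ?thesis .
    qed
    have "R_inner ?R (u n) (u n) = (?G *\<^sub>v vs n) \<bullet> - (?G *\<^sub>v (conj_mat ?R *\<^sub>v conj_vec (vs n)))"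
      unfolding R_inner_def cu Ru ..
    also have "\<dots> = - ((?G *\<^sub>v vs n) \<bullet> (?G *\<^sub>v (conj_mat ?R *\<^sub>v conj_vec (vs n))))"
      using z vc[OF n] by (intro scalar_prod_uminus_right) auto
    also have "(?G *\<^sub>v vs n) \<bullet> (?G *\<^sub>v (conj_mat ?R *\<^sub>v conj_vec (vs n))) = vs n \<bullet> (conj_mat ?R *\<^sub>v conj_vec (vs n))"
      using vc[OF n] z by (rule Gamma_scalar)
    also have "conj_mat ?R *\<^sub>v conj_vec (vs n) = conj_vec (?R *\<^sub>v vs n)"
      using conj_mult_vec[OF R_carrier vc[OF n]] by simp
    also have "vs n \<bullet> conj_vec (?R *\<^sub>v vs n) = cnj (conj_vec (vs n) \<bullet> (?R *\<^sub>v vs n))"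
      using vc[OF n] by (intro cnj_scalar[symmetric]) auto
    also have "conj_vec (vs n) \<bullet> (?R *\<^sub>v vs n) = 1" using norm n unfolding R_inner_def by auto
    finally show ?thesis by simp
  qed
  define T where "T = mat (2*N) (2*N) (\<lambda>(i,k). w k $ i)"
  have Tc: "T \<in> carrier_mat (2*N) (2*N)" unfolding T_def by auto
  have colT: "col T k = w k" if k: "k < 2*N" for k
    unfolding T_def using wc[OF k] k by (intro eq_vecI) auto
  have Tidx: "T $$ (i,k) = w k $ i" if "i < 2*N" "k < 2*N" for i k
    unfolding T_def using that by auto
  have AT: "mat_adjoint T \<in> carrier_mat (2*N) (2*N)" using adj_carrier[OF Tc] .
  have RTc: "?R * T \<in> carrier_mat (2*N) (2*N)" using Tc by (intro mc2) auto
  have adjRT: "mat_adjoint T * (?R * T) = Sigma_mat N"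
  proof (rule eq_matI)
    fix j k assume j: "j < dim_row (Sigma_mat N)" and k: "k < dim_col (Sigma_mat N)"
    hence j: "j < 2*N" and k: "k < 2*N" by auto
    have "(mat_adjoint T * (?R * T)) $$ (j,k) = row (mat_adjoint T) j \<bullet> col (?R * T) k"
      using AT RTc j k by (intro index_mult_mat) auto
    also have "\<dots> = R_inner ?R (w j) (w k)" unfolding R_inner_def
      using adj_row[OF Tc j] colT[OF j] colT[OF k] col_mult2[OF R_carrier Tc k] by simp
    also have "\<dots> = Sigma_mat N $$ (j,k)"
    proof (cases "j = k")
      case True
      then show ?thesis using norm uu j k unfolding Sigma_idx[OF j k] w_def by auto
    next
      case False
      then show ?thesis using orth j k unfolding Sigma_idx[OF j k] w_def u_def by auto
    qed
    finally show "(mat_adjoint T * (?R * T)) $$ (j,k) = Sigma_mat N $$ (j,k)" .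
  qed (use AT Tc in auto)
  have adjRT': "mat_adjoint T * ?R * T = Sigma_mat N" using adjRT a2[OF AT R_carrier Tc] by simp
  have conjT: "T = ?G * conj_mat T * ?G"
  proof (rule eq_matI)
    have cT: "conj_mat T \<in> carrier_mat (2*N) (2*N)" using conj_mat_carrier[of T] Tc by auto
    have GcT: "?G * conj_mat T \<in> carrier_mat (2*N) (2*N)" using cT by (intro mc2) auto
    fix i k assume i: "i < dim_row (?G * conj_mat T * ?G)" and k: "k < dim_col (?G * conj_mat T * ?G)"
    hence i: "i < 2*N" and k: "k < 2*N" by auto
    have "(?G * conj_mat T * ?G) $$ (i,k) = (?G * conj_mat T) $$ (i, ff N k)"
      using GcT i k by (rule Gamma_mult_right)
    also have "\<dots> = conj_mat T $$ (ff N i, ff N k)"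
      using cT i ff_lt[OF k] by (rule Gamma_mult_left)
    also have "\<dots> = cnj (w (ff N k) $ ff N i)"
      using Tc ff_lt[OF i] ff_lt[OF k] Tidx[OF ff_lt[OF i] ff_lt[OF k]] by auto
    also have "\<dots> = w k $ i"
    proof (cases "k < N")
      case True
      then show ?thesis using vc[OF True] i ff_lt[OF i] ff_ff[OF i]
        unfolding w_def u_def by (auto simp: ff_def[of N k] Gamma_mult_vec simp del: index_mult_mat_vec)
    next
      case False
      then have kN: "k - N < N" using k by auto
      show ?thesis using False kN vc[OF kN] i ff_lt[OF i]
        unfolding w_def u_def by (auto simp: ff_def[of N k] Gamma_mult_vec simp del: index_mult_mat_vec)
    qed
    finally show "T $$ (i,k) = (?G * conj_mat T * ?G) $$ (i,k)" using Tidx[OF i k] by simp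
  qed (use Tc in auto)
  have DT: "?D * T = T * mat_diag (2*N) lam"
  proof (rule eq_matI)
    fix i k assume i: "i < dim_row (T * mat_diag (2*N) lam)" and k: "k < dim_col (T * mat_diag (2*N) lam)"
    hence i: "i < 2*N" and k: "k < 2*N" using Tc by (auto simp: mat_diag_def)
    have "(?D * T) $$ (i,k) = (?D *\<^sub>v w k) $ i"
      using Dc Tc i k colT[OF k] by auto
    also have "\<dots> = lam k * w k $ i" unfolding Dw[OF k] using wc[OF k] i by auto
    also have "\<dots> = (T * mat_diag (2*N) lam) $$ (i,k)"
      unfolding mat_diag_mult_right[OF Tc] using i k Tidx[OF i k] by simp
    finally show "(?D * T) $$ (i,k) = (T * mat_diag (2*N) lam) $$ (i,k)" .
  qed (use Tc Dc in \<open>auto simp: mat_diag_def\<close>)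
  have dc: "mat_diag (2*N) lam \<in> carrier_mat (2*N) (2*N)" by simp
  have Sc: "Sigma_mat N \<in> carrier_mat (2*N) (2*N)" by simp
  have Rc: "?R \<in> carrier_mat (2*N) (2*N)" by simp
  have c1: "Sigma_mat N * mat_adjoint T \<in> carrier_mat (2*N) (2*N)" using mc2[OF Sc AT] .
  have c2: "Sigma_mat N * mat_adjoint T * ?R \<in> carrier_mat (2*N) (2*N)" using mc2[OF c1 Rc] .
  have c3: "?D * T \<in> carrier_mat (2*N) (2*N)" using mc2[OF Dc Tc] .
  have c4: "?R * (?D * T) \<in> carrier_mat (2*N) (2*N)" using mc2[OF Rc c3] .
  have c5: "T * mat_diag (2*N) lam \<in> carrier_mat (2*N) (2*N)" using mc2[OF Tc dc] .
  have c6: "?R * (T * mat_diag (2*N) lam) \<in> carrier_mat (2*N) (2*N)" using mc2[OF Rc c5] .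
  have c7: "mat_adjoint T * (?R * T) \<in> carrier_mat (2*N) (2*N)" using mc2[OF AT RTc] .
  have "(Sigma_mat N * mat_adjoint T * ?R) * ?D * T = Sigma_mat N * (mat_adjoint T * (?R * (?D * T)))"
    unfolding a2[OF c2 Dc Tc] a2[OF c1 Rc c3] a2[OF Sc AT c4] ..
  also have "\<dots> = Sigma_mat N * (mat_adjoint T * (?R * (T * mat_diag (2*N) lam)))" unfolding DT ..
  also have "\<dots> = (Sigma_mat N * (mat_adjoint T * (?R * T))) * mat_diag (2*N) lam"
    unfolding a2[OF Sc c7 dc] a2[OF AT RTc dc] a2[OF Rc Tc dc] ..
  also have "\<dots> = mat_diag (2*N) lam" unfolding adjRT Sigma_sq using left_mult_one_mat[OF dc] .
  finally have diagT: "(Sigma_mat N * mat_adjoint T * ?R) * ?D * T = mat_diag (2*N) lam" .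
  have lam_eq: "(\<lambda>k. if k < N then complex_of_real (mu k) else - complex_of_real (mu (k - N))) = lam"
    unfolding lam_def by auto
  show ?thesis unfolding normal_mode_transformation_def lam_eq
    using Tc adjRT' conjT mu_pos diagT by blast
qed

end
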